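(* Let $a,b,c\in\mathbb{C}$ with $a\neq0$, $\Re(b)>0$, $\Re(b+a+c)>0$, $\Re(b+a-c)>0$, $\Re(b-a+c)>0$, $\Re(b-a-c)>0$, and $\frac{a+c}{b},\frac{a-c}{b}\notin\{\pm1,\pm3,\pm5,\dots\}$. Fix a square root $\sqrt{a^2-c^2}$, put $\mu=\frac{\sqrt{a^2-c^2}}{2b}$, $\tau_1=\frac12-\frac{a+c}{2b}$, $\tau_2=\frac12-\frac{a-c}{2b}$, $\tau_3=\frac12+\frac{a+c}{2b}$, $\tau_4=\frac12+\frac{a-c}{2b}$, and $Q=(b-a-c)(b+a+c)(b-a+c)(b+a-c)$. Assume $\frac12\pm\mu\notin\mathbb{Z}_0^-$ and $1+\tau_j\notin\mathbb{Z}_0^-$ ($j=1,\dots,4$). Then $$ {}_7F_6\!\left(\begin{matrix}1,\ \frac32-\mu,\ \frac32+\mu,\ \tau_1,\ \tau_2,\ \tau_3,\ \tau_4\\ \frac12-\mu,\ \frac12+\mu,\ 1+\tau_1,\ 1+\tau_2,\ 1+\tau_3,\ 1+\tau_4\end{matrix};\,-1\right) =\frac{\pi Q}{2\,(ab^3-a^3b+abc^2)}\cdot\frac{\cos\!\big(\frac{a\pi}{2b}\big)\cos\!\big(\frac{c\pi}{2b}\big)}{\cos\!\big(\frac{c\pi}{b}\big)+\cos\!\big(\frac{a\pi}{b}\big)} -\frac{Q}{4\,(ab^3-a^3b+abc^2)}\left[\beta\!\left(\frac{a+b+c}{2b}\right)+\beta\!\left(\frac{a+b-c}{2b}\right)\right].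 $$
   Context: $\mathbb{Z}_0^-=\{0,-1,-2,\dots\}$. The Pochhammer symbol is $(\lambda)_0=1$, $(\lambda)_n=\lambda(\lambda+1)\cdots(\lambda+n-1)$ for $n\ge1$. The generalized hypergeometric series is ${}_pF_q\!\left(\begin{matrix}\alpha_1,\dots,\alpha_p\\ \beta_1,\dots,\beta_q\end{matrix};z\right)=\sum_{n=0}^\infty\frac{(\alpha_1)_n\cdots(\alpha_p)_n}{(\beta_1)_n\cdots(\beta_q)_n}\frac{z^n}{n!}$ (with no $\beta_j\in\mathbb{Z}_0^-$). The (lower case) beta function of one variable is $\beta(x)=\sum_{k=0}^\infty\frac{(-1)^k}{k+x}$ for $x\in\mathbb{C}\setminus\mathbb{Z}_0^-$. *)

theory Defs
  imports "HOL-Analysis.Analysis"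
begin

definition nonpos_int_set :: "complex set" where
  "nonpos_int_set = {z. \<exists>n::nat. z = - of_nat n}"

definition hyp_term :: "complex list \<Rightarrow> complex list \<Rightarrow> complex \<Rightarrow> nat \<Rightarrow> complex" where
  "hyp_term as bs z n =
     (\<Prod>a\<leftarrow>as. pochhammer a n) / (\<Prod>b\<leftarrow>bs. pochhammer b n) * z ^ n / of_nat (fact n)"

definition hypgeom :: "complex list \<Rightarrow> complex list \<Rightarrow> complex \<Rightarrow> complex" where
  "hypgeom as bs z = (\<Sum>n. hyp_term as bs z n)"

definition beta_fun :: "complex \<Rightarrow> complex" where
  "beta_fun x = (\<Sum>k. (-1) ^ k / (of_nat k + x))"

end

theory Submission
  imports Defs
begin



lemma not_int_sin_nz:
  fixes z :: complex assumes "z \<notin> \<int>" shows "sin (of_real pi * z) \<noteq> 0"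
proof
  assume "sin (of_real pi * z) = 0"
  then obtain n :: int where "of_real pi * z = of_real (of_int n * pi)" by (auto simp: sin_eq_0)
  then have "z = of_int n" by (simp add: mult.commute)
  with assms show False by auto
qed

lemma digamma_refl:
  fixes z :: complex assumes z: "z \<notin> \<int>"
  shows "Digamma (1 - z) - Digamma z = of_real pi * cot (of_real pi * z)"
proof -
  have z1: "z \<notin> \<int>\<^sub>\<le>\<^sub>0" using z nonpos_Ints_subset_Ints by blast
  have "1 - z \<notin> \<int>" using z Ints_diff[of 1 "1 - z"] by auto
  then have z2: "1 - z \<notin> \<int>\<^sub>\<le>\<^sub>0" using nonpos_Ints_subset_Ints by blast
  have sn: "sin (of_real pi * z) \<noteq> 0" using not_int_sin_nz[OF z] .
  have d1: "((\<lambda>w. Gamma w * Gamma (1 - w)) has_field_derivative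
      (Gamma z * Digamma z * Gamma (1 - z) + Gamma z * (Gamma (1 - z) * Digamma (1 - z) * (-1)))) (at z)"
    using z1 z2 by (auto intro!: derivative_eq_intros)
  have d2: "((\<lambda>w. of_real pi / sin (of_real pi * w)) has_field_derivative
      (- (of_real pi * (cos (of_real pi * z) * of_real pi)) / (sin (of_real pi * z))^2)) (at z)"
    using sn by (auto intro!: derivative_eq_intros simp: power2_eq_square)
  have eqf: "(\<lambda>w::complex. Gamma w * Gamma (1 - w)) = (\<lambda>w::complex. of_real pi / sin (of_real pi * w))"
    by (rule ext) (rule Gamma_reflection_complex)
  have "Gamma z * Digamma z * Gamma (1 - z) + Gamma z * (Gamma (1 - z) * Digamma (1 - z) * (-1))
     = - (of_real pi * (cos (of_real pi * z) * of_real pi)) / (sin (of_real pi * z))^2"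
    using DERIV_unique[OF d1 d2[folded eqf]] .
  moreover have G: "Gamma z * Gamma (1 - z) = of_real pi / sin (of_real pi * z)"
    by (rule Gamma_reflection_complex)
  moreover have "Gamma z * Digamma z * Gamma (1 - z) + Gamma z * (Gamma (1 - z) * Digamma (1 - z) * (-1))
     = (Gamma z * Gamma (1 - z)) * (Digamma z - Digamma (1 - z))" by (simp add: algebra_simps)
  ultimately have "(of_real pi / sin (of_real pi * z)) * (Digamma z - Digamma (1 - z))
     = - (of_real pi * (cos (of_real pi * z) * of_real pi)) / (sin (of_real pi * z))^2"
    by metis
  then have "Digamma z - Digamma (1 - z) = (- (of_real pi * (cos (of_real pi * z) * of_real pi)) / (sin (of_real pi * z))^2) / (of_real pi / sin (of_real pi * z))"
    using sn by (subst eq_divide_eq) (auto simp: mult.commute)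
  also have "\<dots> = - (of_real pi * cot (of_real pi * z))"
    using sn by (simp add: cot_def field_simps power2_eq_square)
  finally show ?thesis by (simp add: algebra_simps)
qed



lemma digamma_series:
  fixes z :: complex assumes "z \<noteq> 0"
  shows "(\<lambda>k. inverse (of_nat (Suc k)) - inverse (z + of_nat k)) sums (Digamma z + euler_mascheroni)"
  using summable_sums[OF summable_Digamma[OF assms]] by (simp add: Digamma_def)

lemma beta_sums:
  fixes x :: complex assumes x: "x \<notin> \<int>"
  shows "(\<lambda>k. (-1)^k / (of_nat k + x)) sums ((Digamma ((x+1)/2) - Digamma (x/2))/2)"
proof -
  define f where "f k = (-1::complex)^k / (of_nat k + x)" for k
  define L where "L = (Digamma ((x+1)/2) - Digamma (x/2))/2"
  define g where "g j = ((inverse (of_nat (Suc j)) - inverse ((x+1)/2 + of_nat j))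
      - (inverse (of_nat (Suc j)) - inverse (x/2 + of_nat j))) / (2::complex)" for j
  have x0: "x/2 \<noteq> 0" using x by auto
  have x1: "(x+1)/2 \<noteq> 0"
  proof
    assume "(x+1)/2 = 0" then have "x = -1" by (metis add.commute add_eq_0_iff2 divide_eq_0_iff zero_neq_numeral)
    with x show False by auto
  qed
  have gs: "g sums L"
    unfolding g_def L_def
    using sums_divide[OF sums_diff[OF digamma_series[OF x1] digamma_series[OF x0]], of 2]
    by simp
  have nz: "of_nat m + x \<noteq> 0" for m
  proof
    assume "of_nat m + x = 0" then have "x = - of_nat m" by (simp add: eq_neg_iff_add_eq_0 add.commute)
    with x show False by auto
  qed
  have pair: "f (2*j) + f (2*j+1) = g j" for j
  proof -
    have a1: "of_nat (2*j) + x \<noteq> 0" "of_nat (2*j+1) + x \<noteq> 0" using nz by blast+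
    have a2: "(x+1)/2 + of_nat j \<noteq> 0" "x/2 + of_nat j \<noteq> 0"
      using a1 by (auto simp: field_simps)
    have e1: "inverse ((x+1)/2 + of_nat j) = 2 / (of_nat (2*j+1) + x)"
      using a1 a2 by (simp add: field_simps)
    have e2: "inverse (x/2 + of_nat j) = 2 / (of_nat (2*j) + x)"
      using a1 a2 by (simp add: field_simps)
    have gen: "\<And>A u v :: complex. ((A - 2/v) - (A - 2/u))/2 = 1/u + (-1)/v"
      by (simp add: field_simps)
    have "g j = 1 / (of_nat (2*j) + x) + (-1) / (of_nat (2*j+1) + x)"
      unfolding g_def e1 e2 gen ..
    moreover have "f (2*j) + f (2*j+1) = 1 / (of_nat (2*j) + x) + (-1) / (of_nat (2*j+1) + x)"
      unfolding f_def by (simp only: power_mult power_Suc) simp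
    ultimately show ?thesis by simp
  qed
  have psum: "(\<Sum>k<2*m. f k) = (\<Sum>j<m. g j)" for m
    by (induction m) (simp_all add: pair[symmetric] algebra_simps)
  have T: "(\<lambda>m. \<Sum>k<2*m. f k) \<longlonglongrightarrow> L"
    using gs unfolding sums_def psum .
  have finv: "(\<lambda>n. inverse (of_nat n + x)) \<longlonglongrightarrow> 0"
    by (intro filterlim_compose[OF tendsto_inverse_0] tendsto_add_filterlim_at_infinity'[OF _ tendsto_const] tendsto_of_nat)
  have f0: "f \<longlonglongrightarrow> 0"
  proof (rule tendsto_norm_zero_cancel)
    have "(\<lambda>n. inverse (norm (of_nat n + x))) \<longlonglongrightarrow> 0"
      using tendsto_norm[OF finv] unfolding norm_inverse by simp
    moreover have "norm (f n) = inverse (norm (of_nat n + x))" for n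
      unfolding f_def norm_divide norm_power by (simp add: divide_inverse)
    ultimately show "(\<lambda>n. norm (f n)) \<longlonglongrightarrow> 0" by simp
  qed
  have f2: "(\<lambda>m. f (2*m)) \<longlonglongrightarrow> 0"
    using filterlim_compose[OF f0 filterlim_subseq[of "\<lambda>m::nat. 2*m"]]
    by (simp add: strict_mono_def)
  have div2: "filterlim (\<lambda>n::nat. n div 2) sequentially sequentially"
    using filterlim_at_top_div_const_nat[of 2] by simp
  have A: "(\<lambda>n. \<Sum>k<2*(n div 2). f k) \<longlonglongrightarrow> L"
    using filterlim_compose[OF T div2] .
  have B: "(\<lambda>n. f (2*(n div 2))) \<longlonglongrightarrow> 0"
    using filterlim_compose[OF f2 div2] .
  have C: "(\<lambda>n. if even n then 0 else f (2*(n div 2))) \<longlonglongrightarrow> 0"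
  proof (rule Lim_null_comparison)
    show "\<forall>\<^sub>F n in sequentially. norm (if even n then 0 else f (2*(n div 2))) \<le> norm (f (2*(n div 2)))"
      by auto
    show "(\<lambda>n. norm (f (2*(n div 2)))) \<longlonglongrightarrow> 0" using tendsto_norm[OF B] by simp
  qed
  have S: "(\<Sum>k<n. f k) = (\<Sum>k<2*(n div 2). f k) + (if even n then 0 else f (2*(n div 2)))" for n
  proof (cases "even n")
    case True then show ?thesis by simp
  next
    case False
    then have "n = Suc (2*(n div 2))" by presburger
    then have "(\<Sum>k<n. f k) = (\<Sum>k<Suc (2*(n div 2)). f k)" by simp
    also have "\<dots> = (\<Sum>k<2*(n div 2). f k) + f (2*(n div 2))" by simp
    finally show ?thesis using False by simp
  qed
  have SS: "(\<lambda>n. \<Sum>k<n. f k) = (\<lambda>n. (\<Sum>k<2*(n div 2). f k) + (if even n then 0 else f (2*(n div 2))))"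
    using S by (intro ext)
  have "(\<lambda>n. \<Sum>k<n. f k) \<longlonglongrightarrow> L + 0"
    unfolding SS by (intro tendsto_add A C)
  then show ?thesis unfolding sums_def f_def L_def by simp
qed


lemma beta_fun_eq:
  fixes x :: complex assumes "x \<notin> \<int>"
  shows "beta_fun x = (Digamma ((x+1)/2) - Digamma (x/2))/2"
  unfolding beta_fun_def using sums_unique[OF beta_sums[OF assms]] by simp

lemma beta_refl:
  fixes x :: complex assumes x: "x \<notin> \<int>"
  shows "beta_fun x + beta_fun (1 - x) = of_real pi / sin (of_real pi * x)"
proof -
  have x1: "1 - x \<notin> \<int>" using x Ints_diff[of 1 "1 - x"] by auto
  have xh: "x/2 \<notin> \<int>"
  proof
    assume h: "x/2 \<in> \<int>" have "2 * (x/2) \<in> \<int>" by (rule Ints_mult[OF _ h]) simp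
    then have "x \<in> \<int>" by simp
    with x show False by simp
  qed
  have xh1: "(1-x)/2 \<notin> \<int>"
  proof
    assume h: "(1-x)/2 \<in> \<int>" have "2 * ((1-x)/2) \<in> \<int>" by (rule Ints_mult[OF _ h]) simp
    moreover have "2 * ((1-x)/2) = 1 - x" by simp
    ultimately have "1 - x \<in> \<int>" by metis
    with x1 show False by simp
  qed
  have r1: "Digamma (1 - x/2) - Digamma (x/2) = of_real pi * cot (of_real pi * (x/2))"
    using digamma_refl[OF xh] .
  have r2: "Digamma (1 - (1-x)/2) - Digamma ((1-x)/2) = of_real pi * cot (of_real pi * ((1-x)/2))"
    using digamma_refl[OF xh1] .
  have e1: "(1 - x + 1)/2 = 1 - x/2" by (simp add: field_simps)
  have e2: "1 - (1-x)/2 = (x+1)/2" by (simp add: field_simps)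
  define t where "t = of_real pi * (x/2)"
  have t2: "of_real pi * ((1-x)/2) = of_real pi / 2 - t" unfolding t_def by (simp add: field_simps)
  have tx: "of_real pi * x = 2 * t" unfolding t_def by simp
  have sx: "sin (of_real pi * x) \<noteq> 0" using not_int_sin_nz[OF x] .
  then have st: "sin t \<noteq> 0" and ct: "cos t \<noteq> 0" unfolding tx sin_double by auto
  have cot2: "cot (of_real pi / 2 - t) = sin t / cos t"
    unfolding cot_def using sin_cos_eq[of t] cos_sin_eq[of t] by simp
  have "beta_fun x + beta_fun (1 - x)
      = ((Digamma (1 - x/2) - Digamma (x/2)) + (Digamma (1 - (1-x)/2) - Digamma ((1-x)/2)))/2"
    unfolding beta_fun_eq[OF x] beta_fun_eq[OF x1] e1 e2 by (simp add: field_simps)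
  also have "\<dots> = (of_real pi * (cos t / sin t) + of_real pi * (sin t / cos t))/2"
    unfolding r1 r2 t2 cot2 by (simp add: t_def cot_def)
  also have "\<dots> = of_real pi / (2 * sin t * cos t)"
  proof -
    have sc: "of_real pi * (cos t * cos t) + of_real pi * (sin t * sin t) = (of_real pi :: complex)"
      using sin_cos_squared_add[of t] by (simp add: power2_eq_square flip: distrib_left)
    show ?thesis using st ct sc by (simp add: field_simps)
  qed
  also have "\<dots> = of_real pi / sin (of_real pi * x)"
    unfolding tx sin_double by simp
  finally show ?thesis .
qed



lemma poch_shift2:
  fixes z :: complex assumes "z \<noteq> 0" "z + of_nat n \<noteq> 0"
  shows "pochhammer z n = pochhammer (1 + z) n * z / (z + of_nat n)"
proof -
  have "z * pochhammer (z + 1) n = (z + of_nat n) * pochhammer z n"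
    using pochhammer_rec[of z n] pochhammer_rec'[of z n] by simp
  then show ?thesis using assms by (simp add: field_simps add.commute)
qed

lemma poch_shift1:
  fixes z :: complex assumes "z \<noteq> 0"
  shows "pochhammer (z + 1) n = pochhammer z n * (z + of_nat n) / z"
proof -
  have "z * pochhammer (z + 1) n = (z + of_nat n) * pochhammer z n"
    using pochhammer_rec[of z n] pochhammer_rec'[of z n] by simp
  then show ?thesis using assms by (simp add: field_simps)
qed

lemma odd_ne:
  fixes y :: complex
  assumes h: "\<forall>k::nat. y \<noteq> of_nat (2*k+1) \<and> y \<noteq> - of_nat (2*k+1)"
  shows "y \<noteq> 2 * of_int j + 1"
proof (cases "j \<ge> 0")
  case True
  then obtain k where "j = int k" by (metis nonneg_eq_int)
  then have "2 * of_int j + 1 = (of_nat (2*k+1) :: complex)" by simp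
  with h show ?thesis by metis
next
  case False
  define k where "k = nat (- j - 1)"
  have "j = - int k - 1" using False unfolding k_def by simp
  then have "2 * of_int j + 1 = - (of_nat (2*k+1) :: complex)" by simp
  with h show ?thesis by metis
qed

lemma tau_notint:
  fixes y :: complex
  assumes h: "\<forall>k::nat. y \<noteq> of_nat (2*k+1) \<and> y \<noteq> - of_nat (2*k+1)"
  shows "1/2 - y/2 \<notin> \<int>" "1/2 + y/2 \<notin> \<int>"
proof
  assume "1/2 - y/2 \<in> \<int>"
  then obtain n where "1/2 - y/2 = of_int n" by (auto elim: Ints_cases)
  then have "y = 2 * of_int (-n) + 1" by (simp add: field_simps)
  with odd_ne[OF h] show False by blast
next
  show "1/2 + y/2 \<notin> \<int>"
  proof
    assume "1/2 + y/2 \<in> \<int>"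
    then obtain n where "1/2 + y/2 = of_int n" by (auto elim: Ints_cases)
    then have "y = 2 * of_int (n - 1) + 1" by (simp add: field_simps)
    with odd_ne[OF h] show False by blast
  qed
qed

lemma pf0:
  fixes p q y e u1 u2 u3 u4 :: complex
  assumes d: "u1 = y + (1/2 - p)" "u3 = y + (1/2 + p)" "u2 = y + (1/2 - q)" "u4 = y + (1/2 + q)" "e = 1/4 - p*q"
    and nz: "u1 \<noteq> 0" "u2 \<noteq> 0" "u3 \<noteq> 0" "u4 \<noteq> 0" "e \<noteq> 0" "p + q \<noteq> 0"
  shows "((1/2+y)^2 - p*q)/e * ((1/2-p)/u1) * ((1/2-q)/u2) * ((1/2+p)/u3) * ((1/2+q)/u4)
    = ((1/2-p)*(1/2-q)*(1/2+p)*(1/2+q)/(2*(p+q)*e)) * (1/u1 - 1/u3 + 1/u2 - 1/u4)"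
proof -
  define S where "S = u2*u3*u4 - u1*u2*u4 + u1*u3*u4 - u1*u2*u3"
  define C where "C = (1/2-p)*(1/2-q)*(1/2+p)*(1/2+q)"
  define N where "N = (1/2+y)^2 - p*q"
  have key: "N * (2*(p+q)) = S"
    unfolding S_def N_def d by algebra
  have r1: "1/u1 - 1/u3 + 1/u2 - 1/u4 = S/(u1*u2*u3*u4)"
    using nz unfolding S_def by (simp add: field_simps)
  have l1: "N/e * ((1/2-p)/u1) * ((1/2-q)/u2) * ((1/2+p)/u3) * ((1/2+q)/u4) = (N * C) / (e*(u1*u2*u3*u4))"
    unfolding C_def by (simp add: ac_simps)
  have "C/(2*(p+q)*e) * (S/(u1*u2*u3*u4)) = (C * (N * (2*(p+q)))) / ((2*(p+q)) * (e*(u1*u2*u3*u4)))"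
    unfolding key by (simp add: ac_simps)
  also have "\<dots> = (N * C) / (e*(u1*u2*u3*u4))"
  proof -
    have h: "2*(p+q) \<noteq> 0" using nz(6) by (metis mult_eq_0_iff zero_neq_numeral)
    have "(C * (N * (2*(p+q)))) = (2*(p+q)) * (N * C)" by (simp add: ac_simps)
    then have "(C * (N * (2*(p+q)))) / ((2*(p+q)) * (e*(u1*u2*u3*u4))) = ((2*(p+q)) * (N * C)) / ((2*(p+q)) * (e*(u1*u2*u3*u4)))"
      by (simp only:)
    also have "\<dots> = (N * C) / (e*(u1*u2*u3*u4))" by (rule mult_divide_mult_cancel_left[OF h])
    finally show ?thesis .
  qed
  finally have R: "C/(2*(p+q)*e) * (S/(u1*u2*u3*u4)) = (N * C) / (e*(u1*u2*u3*u4))" .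
  show ?thesis unfolding N_def[symmetric] C_def[symmetric] l1 r1 by (rule R[symmetric])
qed

lemma pf:
  fixes p q m y :: complex
  assumes m2: "m^2 = p*q" and pq: "p+q \<noteq> 0" and m0: "1/2-m \<noteq> 0" "1/2+m \<noteq> 0"
    and nz: "y + (1/2-p) \<noteq> 0" "y + (1/2-q) \<noteq> 0" "y + (1/2+p) \<noteq> 0" "y + (1/2+q) \<noteq> 0"
  shows "((1/2-m+y)/(1/2-m)) * ((1/2+m+y)/(1/2+m)) * ((1/2-p)/(y+(1/2-p))) * ((1/2-q)/(y+(1/2-q)))
      * ((1/2+p)/(y+(1/2+p))) * ((1/2+q)/(y+(1/2+q)))
    = ((1/2-p)*(1/2-q)*(1/2+p)*(1/2+q)/(2*(p+q)*(1/4-p*q)))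
      * (1/(y+(1/2-p)) - 1/(y+(1/2+p)) + 1/(y+(1/2-q)) - 1/(y+(1/2+q)))"
proof -
  have n1: "(1/2-m+y)*(1/2+m+y) = (1/2+y)^2 - p*q" using m2 by (simp add: algebra_simps power2_eq_square)
  have n2: "(1/2-m)*(1/2+m) = 1/4 - p*q" using m2 by (simp add: algebra_simps power2_eq_square)
  have e0: "1/4 - p*q \<noteq> 0" using m0 n2 by (metis mult_eq_0_iff)
  have AB: "((1/2-m+y)/(1/2-m)) * ((1/2+m+y)/(1/2+m)) = ((1/2+y)^2 - p*q)/(1/4 - p*q)"
    by (simp flip: n1 n2)
  show ?thesis unfolding AB
    by (rule pf0[OF refl refl refl refl refl nz(1) nz(2) nz(3) nz(4) e0 pq])
qed

lemma trig:
  fixes X Y :: complex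
  assumes "cos (X+Y) \<noteq> 0" "cos (X-Y) \<noteq> 0"
  shows "1 / cos (X+Y) + 1 / cos (X-Y) = 4 * (cos X * cos Y) / (cos (2*Y) + cos (2*X))"
proof -
  have c1: "cos (X+Y) + cos (X-Y) = 2 * cos X * cos Y" by (simp add: cos_add cos_diff)
  have c2: "cos (2*Y) + cos (2*X) = 2 * cos (X+Y) * cos (X-Y)"
  proof -
    have "cos (2*Y) = cos ((X+Y) - (X-Y))" by (rule arg_cong[where f=cos]) simp
    moreover have "cos (2*X) = cos ((X+Y) + (X-Y))" by (rule arg_cong[where f=cos]) simp
    ultimately have "cos (2*Y) + cos (2*X) = cos ((X+Y) - (X-Y)) + cos ((X+Y) + (X-Y))" by simp
    also have "\<dots> = 2 * cos (X+Y) * cos (X-Y)" by (simp only: cos_add cos_diff) simp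
    finally show ?thesis .
  qed
  have "1 / cos (X+Y) + 1 / cos (X-Y) = (cos (X+Y) + cos (X-Y)) / (cos (X+Y) * cos (X-Y))"
    using assms by (simp add: field_simps)
  also have "\<dots> = 4 * (cos X * cos Y) / (2 * cos (X+Y) * cos (X-Y))"
    unfolding c1 by (simp add: field_simps)
  finally show ?thesis unfolding c2 .
qed



lemma ht7:
  fixes z :: complex
  shows "hyp_term [1, a1, a2, a3, a4, a5, a6] [b1, b2, b3, b4, b5, b6] z n =
    (pochhammer a1 n / pochhammer b1 n) * (pochhammer a2 n / pochhammer b2 n) *
    (pochhammer a3 n / pochhammer b3 n) * (pochhammer a4 n / pochhammer b4 n) *
    (pochhammer a5 n / pochhammer b5 n) * (pochhammer a6 n / pochhammer b6 n) * z^n"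
  by (simp add: hyp_term_def times_divide_times_eq ac_simps flip: pochhammer_fact)

lemma distr4:
  fixes K sg x1 x2 x3 x4 :: complex
  shows "(K * (1/x1 - 1/x3 + 1/x2 - 1/x4)) * sg = K * (sg/x1 - sg/x3 + sg/x2 - sg/x4)"
  by (simp add: divide_inverse algebra_simps)

lemma fin:
  fixes Q D P W B3 B4 A1 A2 :: complex
  assumes "D \<noteq> 0" "A1 + A2 = 4*W"
  shows "Q/(8*D) * ((P*A1 - B3) - B3 + (P*A2 - B4) - B4) = P*Q/(2*D)*W - Q/(4*D)*(B3+B4)"
proof -
  have "(P*A1 - B3) - B3 + (P*A2 - B4) - B4 = P*(A1+A2) - 2*(B3+B4)" by (simp add: algebra_simps)
  then show ?thesis using assms by (simp add: field_simps)
qed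

theorem mainTheorem6:
  fixes a b c s :: complex
  assumes ha: "a \<noteq> 0"
    and hb: "Re b > 0"
    and h1: "Re (b + a + c) > 0" and h2: "Re (b + a - c) > 0"
    and h3: "Re (b - a + c) > 0" and h4: "Re (b - a - c) > 0"
    and hodd1: "\<forall>k::nat. (a + c) / b \<noteq> of_nat (2*k+1) \<and> (a + c) / b \<noteq> - of_nat (2*k+1)"
    and hodd2: "\<forall>k::nat. (a - c) / b \<noteq> of_nat (2*k+1) \<and> (a - c) / b \<noteq> - of_nat (2*k+1)"
    and hs: "s ^ 2 = a ^ 2 - c ^ 2"
    and hmu1: "1/2 + s / (2*b) \<notin> nonpos_int_set"
    and hmu2: "1/2 - s / (2*b) \<notin> nonpos_int_set"
    and ht1: "1 + (1/2 - (a + c) / (2*b)) \<notin> nonpos_int_set"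
    and ht2: "1 + (1/2 - (a - c) / (2*b)) \<notin> nonpos_int_set"
    and ht3: "1 + (1/2 + (a + c) / (2*b)) \<notin> nonpos_int_set"
    and ht4: "1 + (1/2 + (a - c) / (2*b)) \<notin> nonpos_int_set"
  shows
    "let \<mu> = s / (2*b);
         \<tau>1 = 1/2 - (a + c) / (2*b);
         \<tau>2 = 1/2 - (a - c) / (2*b);
         \<tau>3 = 1/2 + (a + c) / (2*b);
         \<tau>4 = 1/2 + (a - c) / (2*b);
         Q = (b - a - c) * (b + a + c) * (b - a + c) * (b + a - c);
         D = a * b ^ 3 - a ^ 3 * b + a * b * c ^ 2
     in (hyp_term [1, 3/2 - \<mu>, 3/2 + \<mu>, \<tau>1, \<tau>2, \<tau>3, \<tau>4]
                  [1/2 - \<mu>, 1/2 + \<mu>, 1 + \<tau>1, 1 + \<tau>2, 1 + \<tau>3, 1 + \<tau>4] (-1)) sums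
        (of_real pi * Q / (2 * D) *
           (cos (a * of_real pi / (2*b)) * cos (c * of_real pi / (2*b))
             / (cos (c * of_real pi / b) + cos (a * of_real pi / b)))
         - Q / (4 * D) * (beta_fun ((a + b + c) / (2*b)) + beta_fun ((a + b - c) / (2*b))))"
proof -
  have b0: "b \<noteq> 0" using hb by auto
  define p where "p = (a + c) / (2*b)"
  define q where "q = (a - c) / (2*b)"
  define m where "m = s / (2*b)"
  define t1 where "t1 = 1/2 - p"
  define t2 where "t2 = 1/2 - q"
  define t3 where "t3 = 1/2 + p"
  define t4 where "t4 = 1/2 + q"
  define Q where "Q = (b - a - c) * (b + a + c) * (b - a + c) * (b + a - c)"
  define D where "D = a * b ^ 3 - a ^ 3 * b + a * b * c ^ 2"
  define X where "X = a * of_real pi / (2*b)"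
  define Y where "Y = c * of_real pi / (2*b)"
  have pe: "p = ((a+c)/b)/2" unfolding p_def by simp
  have qe: "q = ((a-c)/b)/2" unfolding q_def by simp
  have t1i: "t1 \<notin> \<int>" and t3i: "t3 \<notin> \<int>"
    unfolding t1_def t3_def pe using tau_notint[OF hodd1] by auto
  have t2i: "t2 \<notin> \<int>" and t4i: "t4 \<notin> \<int>"
    unfolding t2_def t4_def qe using tau_notint[OF hodd2] by auto
  have nzi: "z + of_nat n \<noteq> 0" if "z \<notin> \<int>" for z :: complex and n
  proof
    assume "z + of_nat n = 0" then have "z = - of_nat n" by (simp add: eq_neg_iff_add_eq_0)
    with that show False by auto
  qed
  have z0: "z \<noteq> 0" if "z \<notin> \<int>" for z :: complex using that by auto
  have m2: "m^2 = p*q"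
  proof -
    have hs': "s * s = a * a - c * c" using hs by (simp add: power2_eq_square)
    show ?thesis
      unfolding m_def p_def q_def using b0 hs' by (simp add: power_divide field_simps power2_eq_square)
  qed
  have pq0: "p + q \<noteq> 0"
  proof -
    have "p + q = a / b" unfolding p_def q_def using b0 by (simp add: field_simps)
    then show ?thesis using ha b0 by simp
  qed
  have nps: "\<And>k::nat. z \<noteq> - of_nat k" if "z \<notin> nonpos_int_set" for z
    using that unfolding nonpos_int_set_def by blast
  have m0: "1/2 - m \<noteq> 0" "1/2 + m \<noteq> 0"
    using nps[OF hmu2[folded m_def], of 0] nps[OF hmu1[folded m_def], of 0] by auto
  have pm: "pochhammer (1/2 - m) n \<noteq> 0" "pochhammer (1/2 + m) n \<noteq> 0" for n
    using nps[OF hmu2[folded m_def]] nps[OF hmu1[folded m_def]] by (auto simp: pochhammer_eq_0_iff)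
  have pt: "pochhammer (1 + t1) n \<noteq> 0" "pochhammer (1 + t2) n \<noteq> 0"
           "pochhammer (1 + t3) n \<noteq> 0" "pochhammer (1 + t4) n \<noteq> 0" for n
    using nps[OF ht1[folded p_def, folded t1_def]] nps[OF ht2[folded q_def, folded t2_def]]
          nps[OF ht3[folded p_def, folded t3_def]] nps[OF ht4[folded q_def, folded t4_def]]
    by (auto simp: pochhammer_eq_0_iff)
  have e0: "1/4 - p*q \<noteq> 0"
  proof -
    have "(1/2-m)*(1/2+m) = 1/4 - p*q" using m2 by (simp add: algebra_simps power2_eq_square)
    then show ?thesis using m0 by (metis mult_eq_0_iff)
  qed
  have Deq: "D = 4*a*b^3*(1/4 - p*q)"
    unfolding D_def p_def q_def using b0 by (simp add: field_simps power2_eq_square power3_eq_cube)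
  have b4: "b^4 = b*b*b*b" by (simp add: eval_nat_numeral)
  have Qeq: "Q = 16*b^4*(t1*t2*t3*t4)"
    unfolding Q_def t1_def t2_def t3_def t4_def p_def q_def b4 using b0
    by (simp add: field_simps power2_eq_square power3_eq_cube)
  have pqe: "p + q = a / b" unfolding p_def q_def using b0 by (simp add: field_simps)
  define K where "K = t1*t2*t3*t4/(2*(p+q)*(1/4-p*q))"
  have KQ: "K = Q / (8*D)"
    unfolding K_def Deq Qeq pqe b4 using b0 ha e0 by (simp add: field_simps power2_eq_square power3_eq_cube)
  have tm: "hyp_term [1, 3/2 - m, 3/2 + m, t1, t2, t3, t4]
                  [1/2 - m, 1/2 + m, 1 + t1, 1 + t2, 1 + t3, 1 + t4] (-1) n
      = K * ((-1)^n / (of_nat n + t1) - (-1)^n / (of_nat n + t3)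
             + (-1)^n / (of_nat n + t2) - (-1)^n / (of_nat n + t4))" for n
  proof -
    have em1: "pochhammer (3/2 - m) n = pochhammer (1/2 - m) n * (1/2 - m + of_nat n) / (1/2 - m)"
      using poch_shift1[OF m0(1), of n] by (simp add: algebra_simps)
    have em2: "pochhammer (3/2 + m) n = pochhammer (1/2 + m) n * (1/2 + m + of_nat n) / (1/2 + m)"
      using poch_shift1[OF m0(2), of n] by (simp add: algebra_simps)
    have et: "pochhammer t n = pochhammer (1 + t) n * t / (t + of_nat n)" if "t \<notin> \<int>" for t :: complex
      using poch_shift2[OF z0[OF that] nzi[OF that]] .
    have rm1: "pochhammer (3/2 - m) n / pochhammer (1/2 - m) n = (1/2 - m + of_nat n)/(1/2 - m)"
      unfolding em1 using pm[of n] by simp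
    have rm2: "pochhammer (3/2 + m) n / pochhammer (1/2 + m) n = (1/2 + m + of_nat n)/(1/2 + m)"
      unfolding em2 using pm[of n] by simp
    have rt: "pochhammer t n / pochhammer (1 + t) n = t/(of_nat n + t)"
      if "t \<notin> \<int>" "pochhammer (1 + t) n \<noteq> 0" for t :: complex
      unfolding et[OF that(1)] using that(2) by (simp add: add.commute)
    have "hyp_term [1, 3/2 - m, 3/2 + m, t1, t2, t3, t4]
                  [1/2 - m, 1/2 + m, 1 + t1, 1 + t2, 1 + t3, 1 + t4] (-1) n
      = (((1/2-m+ of_nat n)/(1/2-m)) * ((1/2+m+ of_nat n)/(1/2+m)) * (t1/(of_nat n + t1))
          * (t2/(of_nat n + t2)) * (t3/(of_nat n + t3)) * (t4/(of_nat n + t4))) * (-1)^n"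
      unfolding ht7 rm1 rm2 rt[OF t1i pt(1)] rt[OF t2i pt(2)] rt[OF t3i pt(3)] rt[OF t4i pt(4)] ..
    also have "\<dots> = (K * (1 / (of_nat n + t1) - 1 / (of_nat n + t3)
             + 1 / (of_nat n + t2) - 1 / (of_nat n + t4))) * (-1)^n"
      unfolding K_def
      using pf[OF m2 pq0 m0, of "of_nat n", folded t1_def t2_def t3_def t4_def]
        nzi[OF t1i, of n] nzi[OF t2i, of n] nzi[OF t3i, of n] nzi[OF t4i, of n]
      by (simp add: add.commute)
    also have "\<dots> = K * ((-1)^n / (of_nat n + t1) - (-1)^n / (of_nat n + t3)
             + (-1)^n / (of_nat n + t2) - (-1)^n / (of_nat n + t4))"
      by (rule distr4)
    finally show ?thesis .
  qed
  have bs: "(\<lambda>n. (-1)^n / (of_nat n + t)) sums beta_fun t" if "t \<notin> \<int>" for t :: complex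
    using beta_sums[OF that] unfolding beta_fun_eq[OF that, symmetric] .
  have S: "(\<lambda>n. K * ((-1)^n / (of_nat n + t1) - (-1)^n / (of_nat n + t3)
             + (-1)^n / (of_nat n + t2) - (-1)^n / (of_nat n + t4)))
      sums (K * (beta_fun t1 - beta_fun t3 + beta_fun t2 - beta_fun t4))"
    by (intro sums_mult sums_diff sums_add bs t1i t2i t3i t4i)
  have a1: "of_real pi * t1 = of_real pi / 2 - (X+Y)"
    unfolding t1_def p_def X_def Y_def using b0 by (simp add: field_simps)
  have a2: "of_real pi * t2 = of_real pi / 2 - (X-Y)"
    unfolding t2_def q_def X_def Y_def using b0 by (simp add: field_simps)
  have s1: "sin (of_real pi * t1) = cos (X+Y)" unfolding a1 using cos_sin_eq[of "X+Y"] by simp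
  have s2: "sin (of_real pi * t2) = cos (X-Y)" unfolding a2 using cos_sin_eq[of "X-Y"] by simp
  have cn1: "cos (X+Y) \<noteq> 0" using not_int_sin_nz[OF t1i] s1 by simp
  have cn2: "cos (X-Y) \<noteq> 0" using not_int_sin_nz[OF t2i] s2 by simp
  have t13: "1 - t1 = t3" unfolding t1_def t3_def by simp
  have t24: "1 - t2 = t4" unfolding t2_def t4_def by simp
  have bb1: "beta_fun t1 = of_real pi * (1 / cos (X+Y)) - beta_fun t3"
    using beta_refl[OF t1i] unfolding t13 s1 by (simp add: algebra_simps)
  have bb2: "beta_fun t2 = of_real pi * (1 / cos (X-Y)) - beta_fun t4"
    using beta_refl[OF t2i] unfolding t24 s2 by (simp add: algebra_simps)
  have D0: "D \<noteq> 0" unfolding Deq using ha b0 e0 by simp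
  have val: "K * (beta_fun t1 - beta_fun t3 + beta_fun t2 - beta_fun t4)
     = of_real pi * Q / (2 * D) * (cos X * cos Y / (cos (2*Y) + cos (2*X)))
       - Q / (4 * D) * (beta_fun t3 + beta_fun t4)"
    unfolding KQ bb1 bb2
    by (rule fin[OF D0]) (simp add: trig[OF cn1 cn2])
  have fe: "hyp_term [1, 3/2 - m, 3/2 + m, t1, t2, t3, t4]
                  [1/2 - m, 1/2 + m, 1 + t1, 1 + t2, 1 + t3, 1 + t4] (-1)
     = (\<lambda>n. K * ((-1)^n / (of_nat n + t1) - (-1)^n / (of_nat n + t3)
             + (-1)^n / (of_nat n + t2) - (-1)^n / (of_nat n + t4)))"
    by (rule ext) (rule tm)
  have eb3: "(a + b + c) / (2*b) = t3" unfolding t3_def p_def using b0 by (simp add: field_simps)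
  have eb4: "(a + b - c) / (2*b) = t4" unfolding t4_def q_def using b0 by (simp add: field_simps)
  have c2Y: "c * of_real pi / b = 2*Y" unfolding Y_def using b0 by (simp add: field_simps)
  have c2X: "a * of_real pi / b = 2*X" unfolding X_def using b0 by (simp add: field_simps)
  show ?thesis
    unfolding Let_def eb3 eb4 c2Y c2X X_def[symmetric] Y_def[symmetric]
      m_def[symmetric] p_def[symmetric] q_def[symmetric]
      t1_def[symmetric] t2_def[symmetric] t3_def[symmetric] t4_def[symmetric]
      Q_def[symmetric] D_def[symmetric] fe val[symmetric]
    by (rule S)
qed


end
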